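(* Let $p,q\ge1$, $N>\max(p,q)$, let $\mu$ be a $q\times p$ matrix of measures, and assume $\mathscr M_N$ admits a Gauss--Borel factorization $\mathscr M_N=\mathscr L_N^{-1}\mathscr U_N^{-1}$ (with $\mathscr L_n,\mathscr U_n$, $n\le N$, the leading principal submatrices). Define \[\mathscr T_N:=\mathscr L_N\Lambda^{[N,N+q]}_{[q]}\mathscr M^{[N+q,N]}\mathscr U_N,\quad \mathscr T^{[N-q,N]}:=\mathscr L_{N-q}\Lambda^{[N-q,N]}_{[q]}\mathscr L_N^{-1},\quad \mathscr T^{[N,N-p]}:=\mathscr U_N^{-1}\big(\Lambda^{[N-p,N]}_{[p]}\big)^\top\mathscr U_{N-p}.\] Then $\mathscr T_N\in\mathbb R^{N\times N}$, $\mathscr T^{[N-q,N]}\in\mathbb R^{(N-q)\times N}$ and $\mathscr T^{[N,N-p]}\in\mathbb R^{N\times(N-p)}$ are banded matrices with $q$ superdiagonals and $p$ subdiagonals, i.e. their $(i,j)$ entries vanish unless $-p\le j-i\le q$.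
   Context: All matrices are indexed from $0$. $\mu$ is a $q\times p$ matrix of real measures with finite moments. For $r,n\ge1$, $X^{[n]}_{[r]}(x)$ is the $n\times r$ matrix whose row $k$ is $x^{\lfloor k/r\rfloor}e_{k\bmod r}^\top$ ($e_0,\dots,e_{r-1}$ standard basis of $\mathbb R^r$). Moment matrices: $\mathscr M^{[n,m]}=\int X^{[n]}_{[q]}\,\mathrm d\mu\,(X^{[m]}_{[p]})^\top$, $\mathscr M_n=\mathscr M^{[n,n]}$. Gauss--Borel factorization: $\mathscr M_N=\mathscr L_N^{-1}\mathscr U_N^{-1}$, $\mathscr L_N$ nonsingular lower triangular, $\mathscr U_N$ nonsingular upper triangular. For $r,n\ge1$, $\Lambda^{[n,n+r]}_{[r]}$ is the $n\times(n+r)$ matrix with entries $\delta_{j,i+r}$. *)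

theory Defs
  imports "HOL-Analysis.Analysis" "Jordan_Normal_Form.Matrix"
begin

text \<open>A real (signed) measure on the real line is represented by its Jordan decomposition:
  a pair of (nonnegative) Borel measures, the signed measure being their difference.
  The matrix of measures mu is given by two families mup a b, mum a b (a < q, b < p).\<close>

definition has_finite_moments :: "real measure \<Rightarrow> bool" where
  "has_finite_moments m \<longleftrightarrow> sets m = sets borel \<and> (\<forall>k::nat. integrable m (\<lambda>x. x ^ k))"

definition smoment :: "real measure \<Rightarrow> real measure \<Rightarrow> nat \<Rightarrow> real" where
  "smoment mp mm k = (\<integral>x. x ^ k \<partial>mp) - (\<integral>x. x ^ k \<partial>mm)"

text \<open>Moment matrix M^{[n,m]} = int X^{[n]}_{[q]} d mu (X^{[m]}_{[p]})^T; its (i,j) entry is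
  int x^(i div q) x^(j div p) d mu_{i mod q, j mod p}.\<close>
definition moment_mat ::
  "nat \<Rightarrow> nat \<Rightarrow> (nat \<Rightarrow> nat \<Rightarrow> real measure) \<Rightarrow> (nat \<Rightarrow> nat \<Rightarrow> real measure)
     \<Rightarrow> nat \<Rightarrow> nat \<Rightarrow> real mat" where
  "moment_mat q p mup mum n m =
     mat n m (\<lambda>(i,j). smoment (mup (i mod q) (j mod p)) (mum (i mod q) (j mod p)) (i div q + j div p))"

definition shift_mat :: "nat \<Rightarrow> nat \<Rightarrow> real mat" where
  "shift_mat r n = mat n (n + r) (\<lambda>(i,j). if j = i + r then 1 else 0)"

definition lead_mat :: "nat \<Rightarrow> 'a mat \<Rightarrow> 'a mat" where
  "lead_mat n A = mat n n (\<lambda>(i,j). A $$ (i,j))"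

definition lower_tri :: "'a::zero mat \<Rightarrow> bool" where
  "lower_tri A \<longleftrightarrow> (\<forall>i < dim_row A. \<forall>j < dim_col A. i < j \<longrightarrow> A $$ (i,j) = 0)"

definition banded :: "nat \<Rightarrow> nat \<Rightarrow> 'a::zero mat \<Rightarrow> bool" where
  "banded q p A \<longleftrightarrow> (\<forall>i < dim_row A. \<forall>j < dim_col A.
      \<not> (- int p \<le> int j - int i \<and> int j - int i \<le> int q) \<longrightarrow> A $$ (i,j) = 0)"

end

theory Submission imports Defs begin

definition ubm :: "int \<Rightarrow> real mat \<Rightarrow> bool" where
  "ubm a A \<longleftrightarrow> (\<forall>i<dim_row A. \<forall>j<dim_col A. int j > int i + a \<longrightarrow> A$$(i,j) = 0)"
definition lbm :: "int \<Rightarrow> real mat \<Rightarrow> bool" where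
  "lbm a A \<longleftrightarrow> (\<forall>i<dim_row A. \<forall>j<dim_col A. int j < int i + a \<longrightarrow> A$$(i,j) = 0)"

lemma mult_entry:
  assumes "i < dim_row A" "j < dim_col B" "dim_col A = dim_row B"
  shows "(A*B)$$(i,j) = (\<Sum>k<dim_col A. A$$(i,k) * B$$(k,j))"
proof -
  have "(A*B)$$(i,j) = (\<Sum>k\<in>{0..<dim_row B}. vec_index (row A i) k * vec_index (col B j) k)"
    using assms by (simp add: scalar_prod_def)
  also have "\<dots> = (\<Sum>k<dim_col A. A$$(i,k) * B$$(k,j))"
    using assms by (auto simp: atLeast0LessThan intro!: sum.cong)
  finally show ?thesis .
qed

lemma delta_sum1: "(\<Sum>k<(n::nat). (if k = a then 1 else 0) * (f k::real)) = (if a < n then f a else 0)"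
proof -
  have "(\<Sum>k<(n::nat). (if k = a then 1 else 0) * (f k::real)) = (\<Sum>k<n. if k = a then f k else 0)" by (rule sum.cong) auto
  then show ?thesis by simp
qed
lemma delta_sum2: "(\<Sum>k<(n::nat). (f k::real) * (if k = a then 1 else 0)) = (if a < n then f a else 0)"
proof -
  have "(\<Sum>k<(n::nat). (f k::real) * (if k = a then 1 else 0)) = (\<Sum>k<n. if k = a then f k else 0)" by (rule sum.cong) auto
  then show ?thesis by simp
qed

lemma ubm_mult:
  assumes "ubm a A" "ubm b B" "dim_col A = dim_row B"
  shows "ubm (a+b) (A*B)"
  unfolding ubm_def
proof (intro allI impI)
  fix i j assume i: "i < dim_row (A*B)" and j: "j < dim_col (A*B)" and ij: "int j > int i + (a+b)"
  have "(A*B)$$(i,j) = (\<Sum>k<dim_col A. A$$(i,k) * B$$(k,j))"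
    using mult_entry[of i A j B] i j assms(3) by simp
  also have "\<dots> = 0"
  proof (rule sum.neutral, rule ballI)
    fix k assume k: "k \<in> {..<dim_col A}"
    show "A$$(i,k) * B$$(k,j) = 0"
    proof (cases "int k > int i + a")
      case True then show ?thesis using assms(1) i k unfolding ubm_def by auto
    next
      case False then have "int j > int k + b" using ij by linarith
      then show ?thesis using assms(2,3) j k unfolding ubm_def by auto
    qed
  qed
  finally show "(A*B)$$(i,j) = 0" .
qed

lemma lbm_mult:
  assumes "lbm a A" "lbm b B" "dim_col A = dim_row B"
  shows "lbm (a+b) (A*B)"
  unfolding lbm_def
proof (intro allI impI)
  fix i j assume i: "i < dim_row (A*B)" and j: "j < dim_col (A*B)" and ij: "int j < int i + (a+b)"
  have "(A*B)$$(i,j) = (\<Sum>k<dim_col A. A$$(i,k) * B$$(k,j))"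
    using mult_entry[of i A j B] i j assms(3) by simp
  also have "\<dots> = 0"
  proof (rule sum.neutral, rule ballI)
    fix k assume k: "k \<in> {..<dim_col A}"
    show "A$$(i,k) * B$$(k,j) = 0"
    proof (cases "int k < int i + a")
      case True then show ?thesis using assms(1) i k unfolding lbm_def by auto
    next
      case False then have "int j < int k + b" using ij by linarith
      then show ?thesis using assms(2,3) j k unfolding lbm_def by auto
    qed
  qed
  finally show "(A*B)$$(i,j) = 0" .
qed

lemma shift_left:
  assumes "A \<in> carrier_mat (n+r) m"
  shows "shift_mat r n * A = mat n m (\<lambda>(i,j). A$$(i+r,j))"
proof (rule eq_matI)
  fix i j assume i: "i < dim_row (mat n m (\<lambda>(i,j). A$$(i+r,j)))" and j: "j < dim_col (mat n m (\<lambda>(i,j). A$$(i+r,j)))"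
  have "(shift_mat r n * A)$$(i,j) = (\<Sum>k<n+r. (if k = i + r then 1 else 0) * A$$(k,j))"
    using i j assms by (subst mult_entry) (auto simp: shift_mat_def)
  also have "\<dots> = A$$(i+r,j)" using i by (simp add: delta_sum1)
  finally show "(shift_mat r n * A)$$(i,j) = mat n m (\<lambda>(i,j). A$$(i+r,j)) $$ (i,j)" using i j by simp
qed (use assms in \<open>auto simp: shift_mat_def\<close>)

lemma shift_right:
  assumes "A \<in> carrier_mat m (n+r)"
  shows "A * transpose_mat (shift_mat r n) = mat m n (\<lambda>(i,j). A$$(i,j+r))"
proof (rule eq_matI)
  fix i j assume i: "i < dim_row (mat m n (\<lambda>(i,j). A$$(i,j+r)))" and j: "j < dim_col (mat m n (\<lambda>(i,j). A$$(i,j+r)))"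
  have "(A * transpose_mat (shift_mat r n))$$(i,j) = (\<Sum>k<n+r. A$$(i,k) * (if k = j + r then 1 else 0))"
    using i j assms by (subst mult_entry) (auto simp: shift_mat_def intro!: sum.cong)
  also have "\<dots> = A$$(i,j+r)" using j by (simp add: delta_sum2)
  finally show "(A * transpose_mat (shift_mat r n))$$(i,j) = mat m n (\<lambda>(i,j). A$$(i,j+r)) $$ (i,j)" using i j by simp
qed (use assms in \<open>auto simp: shift_mat_def\<close>)

lemma ubm_shift: "ubm (int r) (shift_mat r n)" and lbm_shift: "lbm (int r) (shift_mat r n)"
  by (auto simp: ubm_def lbm_def shift_mat_def)

lemma ubm_tshift: "ubm (- int r) (transpose_mat (shift_mat r n))"
  and lbm_tshift: "lbm (- int r) (transpose_mat (shift_mat r n))"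
  by (auto simp: ubm_def lbm_def shift_mat_def)

lemma ubm_lead: "ubm a A \<Longrightarrow> n \<le> dim_row A \<Longrightarrow> n \<le> dim_col A \<Longrightarrow> ubm a (lead_mat n A)"
  by (auto simp: ubm_def lead_mat_def)
lemma lbm_lead: "lbm a A \<Longrightarrow> n \<le> dim_row A \<Longrightarrow> n \<le> dim_col A \<Longrightarrow> lbm a (lead_mat n A)"
  by (auto simp: lbm_def lead_mat_def)

lemma moment_entry:
  "i < n \<Longrightarrow> j < m \<Longrightarrow> moment_mat q p mup mum n m $$ (i,j) =
     smoment (mup (i mod q) (j mod p)) (mum (i mod q) (j mod p)) (i div q + j div p)"
  by (simp add: moment_mat_def)

lemma moment_shift:
  assumes "q > 0" "p > 0" "i+q < n" "j < m" "i < n'" "j+p < m'"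
  shows "moment_mat q p mup mum n m $$ (i+q,j) = moment_mat q p mup mum n' m' $$ (i,j+p)"
  using assms by (simp add: moment_entry)

lemma moment_same:
  assumes "i < n" "j < m" "i < n'" "j < m'"
  shows "moment_mat q p mup mum n m $$ (i,j) = moment_mat q p mup mum n' m' $$ (i,j)"
  using assms by (simp add: moment_entry)

lemma upper_inv:
  assumes A: "(A::real mat) \<in> carrier_mat n n" and B: "B \<in> carrier_mat n n" and uA: "upper_triangular A"
    and BA: "B * A = 1\<^sub>m n"
  shows "upper_triangular B"
proof -
  have key: "\<And>i. j < n \<Longrightarrow> i < n \<Longrightarrow> j < i \<Longrightarrow> B$$(i,j) = 0" for j
  proof (induction j rule: less_induct)
    case (less j)
    have ent: "(B*A)$$(i',j) = B$$(i',j) * A$$(j,j)" if i': "i' < n" "j \<le> i'" for i'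
    proof -
      have "(B*A)$$(i',j) = (\<Sum>k<n. B$$(i',k) * A$$(k,j))"
        using A B i' less.prems by (subst mult_entry) auto
      also have "\<dots> = B$$(i',j) * A$$(j,j) + (\<Sum>k\<in>{..<n}-{j}. B$$(i',k) * A$$(k,j))"
        using less.prems by (subst sum.remove[of _ j]) auto
      also have "(\<Sum>k\<in>{..<n}-{j}. B$$(i',k) * A$$(k,j)) = 0"
      proof (rule sum.neutral, rule ballI)
        fix k assume k: "k \<in> {..<n}-{j}"
        show "B$$(i',k) * A$$(k,j) = 0"
        proof (cases "k < j")
          case True
          then have "B$$(i',k) = 0" using less.IH[of k i'] less.prems i' by auto
          then show ?thesis by simp
        next
          case False
          then have "j < k" using k by auto
          then have "A$$(k,j) = 0" using uA A k by (auto simp: upper_triangular_def)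
          then show ?thesis by simp
        qed
      qed
      finally show ?thesis by simp
    qed
    have e1: "(B*A)$$(j,j) = 1" using BA less.prems by simp
    have e2: "(B*A)$$(i,j) = 0" using BA less.prems by simp
    have "B$$(j,j) * A$$(j,j) = 1" by (metis e1 ent le_refl less.prems(1))
    then have "A$$(j,j) \<noteq> 0" by auto
    moreover have "B$$(i,j) * A$$(j,j) = 0" by (metis e2 ent less.prems(2,3) less_imp_le)
    ultimately show ?case by simp
  qed
  show ?thesis using key B by (auto simp: upper_triangular_def)
qed

lemma lower_inv:
  assumes A: "(A::real mat) \<in> carrier_mat n n" and B: "B \<in> carrier_mat n n" and lA: "lower_tri A"
    and AB: "A * B = 1\<^sub>m n"
  shows "lower_tri B"
proof -
  have "transpose_mat B * transpose_mat A = 1\<^sub>m n"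
    using transpose_mult[OF A B] AB by simp
  moreover have "upper_triangular (transpose_mat A)" using lA A by (auto simp: lower_tri_def upper_triangular_def)
  ultimately have "upper_triangular (transpose_mat B)" using upper_inv[of "transpose_mat A" n "transpose_mat B"] A B by auto
  then show ?thesis using B by (auto simp: lower_tri_def upper_triangular_def)
qed


lemma lower_ubm: "lower_tri A \<Longrightarrow> ubm 0 A"
  by (auto simp: lower_tri_def ubm_def)
lemma upper_lbm: "upper_triangular A \<Longrightarrow> lbm 0 A"
  by (auto simp: upper_triangular_def lbm_def)

lemma banded_iff: "banded q p A \<longleftrightarrow> ubm (int q) A \<and> lbm (- int p) A"
  unfolding banded_def ubm_def lbm_def by (auto simp: not_le)

theorem mainTheorem6:
  fixes p q N :: nat
    and mup mum :: "nat \<Rightarrow> nat \<Rightarrow> real measure"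
    and L U Linv Uinv :: "real mat"
  assumes "p \<ge> 1" and "q \<ge> 1" and "N > max p q"
    and "\<forall>a < q. \<forall>b < p. has_finite_moments (mup a b) \<and> has_finite_moments (mum a b)"
    and "L \<in> carrier_mat N N" and "U \<in> carrier_mat N N"
    and "lower_tri L" and "upper_triangular U"
    and "Linv \<in> carrier_mat N N" and "L * Linv = 1\<^sub>m N" and "Linv * L = 1\<^sub>m N"
    and "Uinv \<in> carrier_mat N N" and "U * Uinv = 1\<^sub>m N" and "Uinv * U = 1\<^sub>m N"
    and "moment_mat q p mup mum N N = Linv * Uinv"
  shows "let TN = L * shift_mat q N * moment_mat q p mup mum (N + q) N * U;
             Tq = lead_mat (N - q) L * shift_mat q (N - q) * Linv;
             Tp = Uinv * transpose_mat (shift_mat p (N - p)) * lead_mat (N - p) U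
         in TN \<in> carrier_mat N N \<and> Tq \<in> carrier_mat (N - q) N \<and> Tp \<in> carrier_mat N (N - p)
            \<and> banded q p TN \<and> banded q p Tq \<and> banded q p Tp"
proof -
  note A = assms
  have p0: "p > 0" and q0: "q > 0" and pN: "p < N" and qN: "q < N" using A(1-3) by auto
  define M where "M = moment_mat q p mup mum N N"
  define Mq where "Mq = moment_mat q p mup mum (N+q) N"
  define Mp where "Mp = moment_mat q p mup mum N (N+p)"
  have cM: "M \<in> carrier_mat N N" and cMq: "Mq \<in> carrier_mat (N+q) N" and cMp: "Mp \<in> carrier_mat N (N+p)"
    by (auto simp: M_def Mq_def Mp_def moment_mat_def)
  have cL: "L \<in> carrier_mat N N" and cU: "U \<in> carrier_mat N N" and cLi: "Linv \<in> carrier_mat N N"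
    and cUi: "Uinv \<in> carrier_mat N N" using A by auto
  have MU: "M * U = Linv"
  proof -
    have "M * U = Linv * (Uinv * U)" using A(15) cLi cUi cU unfolding M_def by simp
    also have "\<dots> = Linv" using A(14) cLi by simp
    finally show ?thesis .
  qed
  have LM: "L * M = Uinv"
  proof -
    have "L * M = (L * Linv) * Uinv" using A(15) cLi cUi cL unfolding M_def by simp
    also have "\<dots> = Uinv" using A(10) cUi by simp
    finally show ?thesis .
  qed
  have ltLi: "lower_tri Linv" using lower_inv[OF cL cLi A(7) A(10)] .
  have utUi: "upper_triangular Uinv" using upper_inv[OF cU cUi A(8) A(14)] .
  have uL: "ubm 0 L" using lower_ubm[OF A(7)] .
  have uLi: "ubm 0 Linv" using lower_ubm[OF ltLi] .
  have lU: "lbm 0 U" using upper_lbm[OF A(8)] .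
  have lUi: "lbm 0 Uinv" using upper_lbm[OF utUi] .
  have Mentry: "M$$(a,b) = Mq$$(a,b)" "M$$(a,b) = Mp$$(a,b)" if "a < N" "b < N" for a b
    using that unfolding M_def Mq_def Mp_def by (auto intro: moment_same)
  have MUentry: "(\<Sum>k<N. M$$(a,k) * U$$(k,b)) = Linv$$(a,b)" if "a < N" "b < N" for a b
    using mult_entry[of a M b U] that cM cU MU by simp
  have LMentry: "(\<Sum>k<N. L$$(a,k) * M$$(k,b)) = Uinv$$(a,b)" if "a < N" "b < N" for a b
    using mult_entry[of a L b M] that cM cL LM by simp

  define X where "X = shift_mat q N * Mq"
  have X1: "X = mat N N (\<lambda>(i,j). Mq$$(i+q,j))" unfolding X_def using shift_left[OF cMq] .
  have X2: "X = Mp * transpose_mat (shift_mat p N)"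
  proof -
    have "Mp * transpose_mat (shift_mat p N) = mat N N (\<lambda>(i,j). Mp$$(i,j+p))" using shift_right[OF cMp] .
    also have "\<dots> = mat N N (\<lambda>(i,j). Mq$$(i+q,j))"
      by (rule eq_matI) (auto simp: Mp_def Mq_def intro!: moment_shift[symmetric] p0 q0)
    finally show ?thesis using X1 by simp
  qed
  have cX: "X \<in> carrier_mat N N" using X1 by simp
  have uXU: "ubm (int q) (X * U)"
    unfolding ubm_def
  proof (intro allI impI)
    fix i j assume i: "i < dim_row (X*U)" and j: "j < dim_col (X*U)" and ij: "int j > int i + int q"
    have iN: "i < N" "j < N" "i + q < N" using i j ij cX cU by auto
    have "(X*U)$$(i,j) = (\<Sum>k<N. X$$(i,k) * U$$(k,j))"
      using mult_entry[of i X j U] iN cX cU by simp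
    also have "\<dots> = (\<Sum>k<N. M$$(i+q,k) * U$$(k,j))"
      using iN by (intro sum.cong) (auto simp: X1 Mentry)
    also have "\<dots> = Linv$$(i+q,j)" using MUentry iN by simp
    also have "\<dots> = 0" using uLi cLi iN ij unfolding ubm_def by auto
    finally show "(X*U)$$(i,j) = 0" .
  qed
  have lLMp: "lbm 0 (L * Mp)"
    unfolding lbm_def
  proof (intro allI impI)
    fix i j assume i: "i < dim_row (L*Mp)" and j: "j < dim_col (L*Mp)" and ij: "int j < int i + 0"
    have iN: "i < N" "j < N" using i j ij cL cMp by auto
    have "(L*Mp)$$(i,j) = (\<Sum>k<N. L$$(i,k) * Mp$$(k,j))"
      using mult_entry[of i L j Mp] iN cL cMp by simp
    also have "\<dots> = (\<Sum>k<N. L$$(i,k) * M$$(k,j))"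
      using iN by (intro sum.cong) (auto simp: Mentry(2))
    also have "\<dots> = Uinv$$(i,j)" using LMentry iN by simp
    also have "\<dots> = 0" using lUi cUi iN ij unfolding lbm_def by auto
    finally show "(L*Mp)$$(i,j) = 0" .
  qed
  define TN where "TN = L * shift_mat q N * moment_mat q p mup mum (N + q) N * U"
  have cshq: "shift_mat q N \<in> carrier_mat N (N+q)" by (simp add: shift_mat_def)
  have cshp: "transpose_mat (shift_mat p N) \<in> carrier_mat (N+p) N" by (simp add: shift_mat_def)
  have TN0: "TN = L * X * U"
      unfolding TN_def X_def Mq_def[symmetric] using cL cshq cMq cU by (simp add: assoc_mult_mat)
  have cX': "X \<in> carrier_mat N N" using X1 by simp
  have TN1: "TN = L * (X * U)" unfolding TN0 using cL cX' cU by (simp add: assoc_mult_mat)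
  have TN2: "TN = (L * Mp) * transpose_mat (shift_mat p N) * U"
  proof -
    have "TN = L * X * U"
      unfolding TN_def X_def Mq_def[symmetric] using cL cshq cMq cU by (simp add: assoc_mult_mat)
    also have "\<dots> = (L * Mp) * transpose_mat (shift_mat p N) * U"
      unfolding X2 using cL cMp cshp cU by (simp add: assoc_mult_mat)
    finally show ?thesis .
  qed
  have cTN: "TN \<in> carrier_mat N N" unfolding TN1 using cL cX cU by simp
  have bTN: "banded q p TN"
  proof -
    have "ubm (0 + int q) TN" unfolding TN1 by (rule ubm_mult[OF uL uXU]) (use cL cX cU in auto)
    moreover have "lbm (0 + - int p + 0) TN" unfolding TN2
      by (rule lbm_mult[OF lbm_mult[OF lLMp lbm_tshift[of p N]] lU]) (use cL cMp cshp cU in auto)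
    ultimately show ?thesis by (simp add: banded_iff)
  qed

  define Tq where "Tq = lead_mat (N - q) L * shift_mat q (N - q) * Linv"
  have cleadL: "lead_mat (N-q) L \<in> carrier_mat (N-q) (N-q)" by (simp add: lead_mat_def)
  have csq: "shift_mat q (N-q) \<in> carrier_mat (N-q) N" using qN by (simp add: shift_mat_def)
  have cM': "M \<in> carrier_mat (N - q + q) N" using cM qN by simp
  define Y0 where "Y0 = shift_mat q (N-q) * M"
  have Y01: "Y0 = mat (N-q) N (\<lambda>(i,j). M$$(i+q,j))" unfolding Y0_def using shift_left[OF cM'] .
  define Y where "Y = lead_mat (N-q) L * Y0"
  have cY: "Y \<in> carrier_mat (N-q) N" unfolding Y_def Y01 using cleadL by simp
  have Tq1: "Tq = Y * U"
  proof -
    have "Tq = lead_mat (N-q) L * (shift_mat q (N-q) * (M * U))"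
      unfolding Tq_def MU using cleadL csq cLi cM cU by (simp add: assoc_mult_mat)
    also have "\<dots> = Y * U" unfolding Y_def Y0_def
      by (simp only: assoc_mult_mat[OF cleadL mult_carrier_mat[OF csq cM] cU] assoc_mult_mat[OF csq cM cU])
    finally show ?thesis .
  qed
  have lY: "lbm (- int p) Y"
    unfolding lbm_def
  proof (intro allI impI)
    fix i j assume i: "i < dim_row Y" and j: "j < dim_col Y" and ij: "int j < int i + - int p"
    have iN: "i < N - q" "j < N" "j + p < i" using i j ij cY by auto
    have "Y$$(i,j) = (\<Sum>k<N-q. lead_mat (N-q) L $$ (i,k) * Y0$$(k,j))"
      using mult_entry[of i "lead_mat (N-q) L" j Y0] iN cleadL Y01 unfolding Y_def by simp
    also have "\<dots> = (\<Sum>k<N-q. L$$(i,k) * M$$(k,j+p))"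
    proof (intro sum.cong refl)
      fix k assume k: "k \<in> {..<N-q}"
      have "M$$(k+q,j) = M$$(k,j+p)" unfolding M_def
        using k iN by (intro moment_shift p0 q0) auto
      then show "lead_mat (N-q) L $$ (i,k) * Y0$$(k,j) = L$$(i,k) * M$$(k,j+p)"
        using k iN by (simp add: Y01 lead_mat_def)
    qed
    also have "\<dots> = (\<Sum>k<N. L$$(i,k) * M$$(k,j+p))"
    proof (rule sum.mono_neutral_left)
      show "\<forall>k\<in>{..<N} - {..<N-q}. L$$(i,k) * M$$(k,j+p) = 0"
        using uL cL iN unfolding ubm_def by auto
    qed auto
    also have "\<dots> = Uinv$$(i,j+p)" using LMentry iN by simp
    also have "\<dots> = 0" using lUi cUi iN unfolding lbm_def by auto
    finally show "Y$$(i,j) = 0" .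
  qed
  have cTq: "Tq \<in> carrier_mat (N-q) N" unfolding Tq1 using cY cU by simp
  have bTq: "banded q p Tq"
  proof -
    have "ubm (0 + int q + 0) Tq" unfolding Tq_def
      by (rule ubm_mult[OF ubm_mult[OF ubm_lead[OF uL, of "N-q"] ubm_shift[of q "N-q"]] uLi])
        (use cL cleadL csq cLi in auto)
    moreover have "lbm (- int p + 0) Tq" unfolding Tq1
      by (rule lbm_mult[OF lY lU]) (use cY cU in auto)
    ultimately show ?thesis by (simp add: banded_iff)
  qed

  define Tp where "Tp = Uinv * transpose_mat (shift_mat p (N - p)) * lead_mat (N - p) U"
  have cleadU: "lead_mat (N-p) U \<in> carrier_mat (N-p) (N-p)" by (simp add: lead_mat_def)
  have csp: "transpose_mat (shift_mat p (N-p)) \<in> carrier_mat N (N-p)" using pN by (simp add: shift_mat_def)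
  have cM'': "M \<in> carrier_mat N (N - p + p)" using cM pN by simp
  define Z0 where "Z0 = M * transpose_mat (shift_mat p (N-p))"
  have Z01: "Z0 = mat N (N-p) (\<lambda>(i,j). M$$(i,j+p))" unfolding Z0_def using shift_right[OF cM''] .
  define Z where "Z = Z0 * lead_mat (N-p) U"
  have cZ0: "Z0 \<in> carrier_mat N (N-p)" unfolding Z01 by simp
  have cZ: "Z \<in> carrier_mat N (N-p)" unfolding Z_def by (rule mult_carrier_mat[OF cZ0 cleadU])
  have Tp1: "Tp = L * Z"
  proof -
    have "Tp = (L * M) * transpose_mat (shift_mat p (N - p)) * lead_mat (N - p) U"
      unfolding Tp_def LM ..
    also have "\<dots> = L * Z" unfolding Z_def Z0_def
      by (simp only: assoc_mult_mat[OF cL cM csp] assoc_mult_mat[OF cL mult_carrier_mat[OF cM csp] cleadU])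
    finally show ?thesis .
  qed
  have uZ: "ubm (int q) Z"
    unfolding ubm_def
  proof (intro allI impI)
    fix i j assume i: "i < dim_row Z" and j: "j < dim_col Z" and ij: "int j > int i + int q"
    have iN: "i < N" "j < N - p" "i + q < j" using i j ij cZ by auto
    have "Z$$(i,j) = (\<Sum>k<N-p. Z0$$(i,k) * lead_mat (N-p) U $$ (k,j))"
      using mult_entry[of i Z0 j "lead_mat (N-p) U"] iN cleadU Z01 unfolding Z_def by simp
    also have "\<dots> = (\<Sum>k<N-p. M$$(i+q,k) * U$$(k,j))"
    proof (intro sum.cong refl)
      fix k assume k: "k \<in> {..<N-p}"
      have "M$$(i+q,k) = M$$(i,k+p)" unfolding M_def
        using k iN by (intro moment_shift p0 q0) auto
      then show "Z0$$(i,k) * lead_mat (N-p) U $$ (k,j) = M$$(i+q,k) * U$$(k,j)"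
        using k iN by (simp add: Z01 lead_mat_def)
    qed
    also have "\<dots> = (\<Sum>k<N. M$$(i+q,k) * U$$(k,j))"
    proof (rule sum.mono_neutral_left)
      show "\<forall>k\<in>{..<N} - {..<N-p}. M$$(i+q,k) * U$$(k,j) = 0"
        using lU cU iN unfolding lbm_def by auto
    qed auto
    also have "\<dots> = Linv$$(i+q,j)" using MUentry iN by simp
    also have "\<dots> = 0" using uLi cLi iN unfolding ubm_def by auto
    finally show "Z$$(i,j) = 0" .
  qed
  have cTp: "Tp \<in> carrier_mat N (N-p)" unfolding Tp1 by (rule mult_carrier_mat[OF cL cZ])
  have bTp: "banded q p Tp"
  proof -
    have "ubm (0 + int q) Tp" unfolding Tp1
      by (rule ubm_mult[OF uL uZ]) (use cL cZ in auto)
    moreover have "lbm (0 + - int p + 0) Tp" unfolding Tp_def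
      by (rule lbm_mult[OF lbm_mult[OF lUi lbm_tshift[of p "N-p"]] lbm_lead[OF lU, of "N-p"]])
        (use cUi csp cU cleadU in auto)
    ultimately show ?thesis by (simp add: banded_iff)
  qed
  show ?thesis unfolding Let_def TN_def[symmetric] Tq_def[symmetric] Tp_def[symmetric]
    using cTN cTq cTp bTN bTq bTp by simp
qed

end
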